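(* Let $G$ be a plane geometric graph, and let $Q$ be a finite set of points in the plane that is disjoint from $G$. Let $G'$ be the geometric graph obtained from $G$ by adding the points of $Q$ as vertices and connecting every point $p\in Q$ by a straight-line segment to its closest visible vertex of $G$. Then $G'$ is plane.
   Context: A geometric graph is a graph whose vertices are points in the plane and whose edges are straight-line segments between their endpoints; it is plane if no two of its edges cross. For a plane geometric graph $G$ and a point $p$ not in $G$, a vertex $q$ of $G$ is visible from $p$ if the segment $pq$ does not cross any edge of $G$. Among all vertices of $G$ visible from $p$, the one closest to $p$ (in Euclidean distance) is called the closest visible vertex of $G$ from $p$. A set $Q$ is disjoint from $G$ if no point of $Q$ lies on a vertex or edge of $G$. *)

theory Defs
  imports "HOL-Analysis.Analysis"
begin

type_synonym pt = "real^2"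

definition seg_cross :: "pt \<Rightarrow> pt \<Rightarrow> pt \<Rightarrow> pt \<Rightarrow> bool" where
  "seg_cross a b c d \<longleftrightarrow>
     (\<exists>x. closed_segment a b \<inter> closed_segment c d = {x} \<and>
          x \<in> open_segment a b \<and> x \<in> open_segment c d)"

definition geometric_graph :: "pt set \<Rightarrow> pt set set \<Rightarrow> bool" where
  "geometric_graph V E \<longleftrightarrow> finite V \<and>
     (\<forall>e\<in>E. \<exists>a b. e = {a, b} \<and> a \<in> V \<and> b \<in> V \<and> a \<noteq> b)"

definition edges_cross :: "pt set \<Rightarrow> pt set \<Rightarrow> bool" where
  "edges_cross e f \<longleftrightarrow> (\<exists>a b c d. e = {a, b} \<and> f = {c, d} \<and> seg_cross a b c d)"

definition plane_graph :: "pt set \<Rightarrow> pt set set \<Rightarrow> bool" where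
  "plane_graph V E \<longleftrightarrow> geometric_graph V E \<and> (\<forall>e\<in>E. \<forall>f\<in>E. \<not> edges_cross e f)"

definition graph_points :: "pt set \<Rightarrow> pt set set \<Rightarrow> pt set" where
  "graph_points V E = V \<union> \<Union>{closed_segment a b | a b. {a, b} \<in> E}"

definition visible :: "pt set \<Rightarrow> pt set set \<Rightarrow> pt \<Rightarrow> pt \<Rightarrow> bool" where
  "visible V E p q \<longleftrightarrow> q \<in> V \<and> (\<forall>a b. {a, b} \<in> E \<longrightarrow> \<not> seg_cross p q a b)"

definition closest_visible :: "pt set \<Rightarrow> pt set set \<Rightarrow> pt \<Rightarrow> pt \<Rightarrow> bool" where
  "closest_visible V E p q \<longleftrightarrow> visible V E p q \<and>
     (\<forall>q'. visible V E p q' \<longrightarrow> dist p q \<le> dist p q')"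

end

theory Submission
  imports Defs
begin


definition cr :: "pt \<Rightarrow> pt \<Rightarrow> real" where
  "cr u w = u$1 * w$2 - u$2 * w$1"

lemma vec2_eq: "(x::pt) = y \<longleftrightarrow> x$1 = y$1 \<and> x$2 = y$2"
  by (simp add: vec_eq_iff forall_2)

lemma open_seg_iff: "x \<in> open_segment a b \<longleftrightarrow> a \<noteq> b \<and> (\<exists>u. 0 < u \<and> u < 1 \<and> x = a + u *\<^sub>R (b - a))"
  by (simp add: in_segment algebra_simps)

lemma closed_seg_iff: "x \<in> closed_segment a b \<longleftrightarrow> (\<exists>u. 0 \<le> u \<and> u \<le> 1 \<and> x = a + u *\<^sub>R (b - a))"
  by (simp add: in_segment algebra_simps)

lemma half_le: "X \<le> Y \<Longrightarrow> 0 < Y \<Longrightarrow> X / 2 \<le> (Y::real)" by linarith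

lemma parallel_mult:
  assumes "cr e f = 0" "f \<noteq> 0"
  shows "\<exists>k. e = k *\<^sub>R f"
proof (cases "f$1 = 0")
  case True
  then have f2: "f$2 \<noteq> 0" using assms(2) by (auto simp: vec2_eq)
  have "e$1 * f$2 = 0" using assms(1) True by (simp add: cr_def)
  then have "e$1 = 0" using f2 by simp
  then show ?thesis using True f2
    by (intro exI[of _ "e$2 / f$2"]) (simp add: vec2_eq)
next
  case False
  have "e$1 * f$2 = e$2 * f$1" using assms(1) by (simp add: cr_def)
  then show ?thesis using False
    by (intro exI[of _ "e$1 / f$1"]) (auto simp: vec2_eq field_simps)
qed

lemma seg_cross_nonpar:
  assumes "seg_cross a b c d"
  shows "cr (b - a) (d - c) \<noteq> 0"
proof
  assume cr0: "cr (b - a) (d - c) = 0"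
  from assms obtain z where z: "closed_segment a b \<inter> closed_segment c d = {z}"
    "z \<in> open_segment a b" "z \<in> open_segment c d" unfolding seg_cross_def by blast
  from z(2) obtain \<mu> where ab: "a \<noteq> b" "0 < \<mu>" "\<mu> < 1" "z = a + \<mu> *\<^sub>R (b - a)"
    by (auto simp: open_seg_iff)
  from z(3) obtain \<nu> where cd: "c \<noteq> d" "0 < \<nu>" "\<nu> < 1" "z = c + \<nu> *\<^sub>R (d - c)"
    by (auto simp: open_seg_iff)
  obtain k where k: "b - a = k *\<^sub>R (d - c)" using parallel_mult[OF cr0] cd(1) by auto
  define m where "m = min \<nu> (1 - \<nu>)"
  define \<epsilon> where "\<epsilon> = min (min \<mu> (1 - \<mu>)) (m / (\<bar>k\<bar> + 1)) / 2"
  have m: "m > 0" using cd by (simp add: m_def)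
  have ep: "\<epsilon> > 0" using ab m by (simp add: \<epsilon>_def)
  have e1: "\<epsilon> \<le> \<mu>" "\<epsilon> \<le> 1 - \<mu>" using ab ep by (auto simp: \<epsilon>_def)
  have mk: "m / (\<bar>k\<bar> + 1) > 0" using m by simp
  have "min (min \<mu> (1 - \<mu>)) (m / (\<bar>k\<bar> + 1)) \<le> m / (\<bar>k\<bar> + 1)" by (rule min.cobounded2)
  then have "\<epsilon> \<le> m / (\<bar>k\<bar> + 1)" using mk unfolding \<epsilon>_def by (rule half_le)
  then have "\<epsilon> * (\<bar>k\<bar> + 1) \<le> m" by (simp add: field_simps)
  then have ek: "\<bar>\<epsilon> * k\<bar> \<le> m" using ep by (simp add: abs_mult algebra_simps)
  then have e2: "0 \<le> \<nu> + \<epsilon> * k" "\<nu> + \<epsilon> * k \<le> 1" unfolding m_def by (auto simp: abs_le_iff)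
  define z' where "z' = z + \<epsilon> *\<^sub>R (b - a)"
  have "z' \<in> closed_segment a b" unfolding closed_seg_iff using e1 ab ep
    by (intro exI[of _ "\<mu> + \<epsilon>"]) (simp add: z'_def algebra_simps)
  moreover have "z' \<in> closed_segment c d" unfolding closed_seg_iff using e2 cd
    by (intro exI[of _ "\<nu> + \<epsilon> * k"]) (simp add: z'_def k algebra_simps)
  moreover have "z' \<noteq> z" using ep ab by (simp add: z'_def)
  ultimately show False using z(1) by blast
qed

lemma seg_cross_intro:
  assumes "z \<in> open_segment a b" "z \<in> open_segment c d" "cr (b - a) (d - c) \<noteq> 0"
  shows "seg_cross a b c d"
  unfolding seg_cross_def
proof (intro exI conjI)
  from assms(1) obtain \<mu> where ab: "a \<noteq> b" "0 < \<mu>" "\<mu> < 1" "z = a + \<mu> *\<^sub>R (b - a)"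
    by (auto simp: open_seg_iff)
  from assms(2) obtain \<nu> where cd: "c \<noteq> d" "0 < \<nu>" "\<nu> < 1" "z = c + \<nu> *\<^sub>R (d - c)"
    by (auto simp: open_seg_iff)
  show "closed_segment a b \<inter> closed_segment c d = {z}"
  proof
    show "{z} \<subseteq> closed_segment a b \<inter> closed_segment c d"
      using assms(1,2) open_closed_segment by blast
    show "closed_segment a b \<inter> closed_segment c d \<subseteq> {z}"
    proof
      fix w assume "w \<in> closed_segment a b \<inter> closed_segment c d"
      then have "w \<in> closed_segment a b" "w \<in> closed_segment c d" by auto
      then obtain \<mu>' \<nu>' where w: "w = a + \<mu>' *\<^sub>R (b - a)" "w = c + \<nu>' *\<^sub>R (d - c)"
        unfolding closed_seg_iff by blast
      have "w - z = (\<mu>' - \<mu>) *\<^sub>R (b - a)"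
        unfolding w(1) ab(4) by (simp add: scaleR_diff_left)
      moreover have "w - z = (\<nu>' - \<nu>) *\<^sub>R (d - c)"
        unfolding w(2) cd(4) by (simp add: scaleR_diff_left)
      ultimately have "(\<mu>' - \<mu>) *\<^sub>R (b - a) = (\<nu>' - \<nu>) *\<^sub>R (d - c)" by simp
      then have e1: "(\<mu>' - \<mu>) * (b - a)$1 = (\<nu>' - \<nu>) * (d - c)$1"
        and e2: "(\<mu>' - \<mu>) * (b - a)$2 = (\<nu>' - \<nu>) * (d - c)$2" by (simp_all add: vec2_eq)
      have "(\<mu>' - \<mu>) * cr (b - a) (d - c) = 0"
      proof -
        have "(\<mu>' - \<mu>) * cr (b - a) (d - c) = ((\<mu>' - \<mu>) * (b - a)$1) * (d - c)$2 - ((\<mu>' - \<mu>) * (b - a)$2) * (d - c)$1"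
          by (simp add: cr_def algebra_simps)
        also have "\<dots> = 0" unfolding e1 e2 by (simp add: algebra_simps)
        finally show ?thesis .
      qed
      then have "\<mu>' = \<mu>" using assms(3) by simp
      then show "w \<in> {z}" using w ab by simp
    qed
  qed
  show "z \<in> open_segment a b" "z \<in> open_segment c d" by fact+
qed

lemma cr_add1[simp]: "cr (x + y) w = cr x w + cr y w" by (simp add: cr_def algebra_simps)
lemma cr_add2[simp]: "cr w (x + y) = cr w x + cr w y" by (simp add: cr_def algebra_simps)
lemma cr_diff1[simp]: "cr (x - y) w = cr x w - cr y w" by (simp add: cr_def algebra_simps)
lemma cr_diff2[simp]: "cr w (x - y) = cr w x - cr w y" by (simp add: cr_def algebra_simps)
lemma cr_scale1[simp]: "cr (c *\<^sub>R x) w = c * cr x w" by (simp add: cr_def algebra_simps)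
lemma cr_scale2[simp]: "cr w (c *\<^sub>R x) = c * cr w x" by (simp add: cr_def algebra_simps)
lemma cr_neg1[simp]: "cr (- x) w = - cr x w" by (simp add: cr_def algebra_simps)
lemma cr_neg2[simp]: "cr w (- x) = - cr w x" by (simp add: cr_def algebra_simps)
lemma cr_zero1[simp]: "cr 0 w = 0" by (simp add: cr_def)
lemma cr_zero2[simp]: "cr w 0 = 0" by (simp add: cr_def)
lemma cr_self[simp]: "cr x x = 0" by (simp add: cr_def algebra_simps)
lemma cr_swap: "cr x y = - cr y x" by (simp add: cr_def algebra_simps)

lemma cr_decomp:
  assumes "cr u w \<noteq> 0"
  shows "Z = (cr Z w / cr u w) *\<^sub>R u + (cr u Z / cr u w) *\<^sub>R w"
proof -
  have i1: "cr Z w * u$1 + cr u Z * w$1 = Z$1 * cr u w" by (simp add: cr_def algebra_simps)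
  have i2: "cr Z w * u$2 + cr u Z * w$2 = Z$2 * cr u w" by (simp add: cr_def algebra_simps)
  have "(cr Z w / cr u w) * u$1 + (cr u Z / cr u w) * w$1 = (cr Z w * u$1 + cr u Z * w$1) / cr u w"
    by (simp add: add_divide_distrib)
  moreover have "(cr Z w / cr u w) * u$2 + (cr u Z / cr u w) * w$2 = (cr Z w * u$2 + cr u Z * w$2) / cr u w"
    by (simp add: add_divide_distrib)
  ultimately show ?thesis unfolding vec2_eq using i1 i2 assms by simp
qed

lemma cr_pluecker:
  assumes "cr u w \<noteq> 0"
  shows "(cr u Z / cr u w) * (cr V w / cr u w) - (cr Z w / cr u w) * (cr u V / cr u w) = cr V Z / cr u w"
proof -
  have i: "cr u Z * cr V w - cr Z w * cr u V = cr u w * cr V Z" by (simp add: cr_def algebra_simps)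
  have "(cr u Z / cr u w) * (cr V w / cr u w) - (cr Z w / cr u w) * (cr u V / cr u w)
     = (cr u Z * cr V w - cr Z w * cr u V) / (cr u w * cr u w)"
    by (simp add: diff_divide_distrib)
  also have "\<dots> = cr V Z / cr u w" unfolding i using assms by simp
  finally show ?thesis .
qed

lemma seg_cross_sym: "seg_cross a b c d \<longleftrightarrow> seg_cross c d a b"
  unfolding seg_cross_def by (auto simp: Int_commute)
lemma seg_cross_rev1: "seg_cross a b c d \<longleftrightarrow> seg_cross b a c d"
  unfolding seg_cross_def by (simp add: closed_segment_commute open_segment_commute)
lemma seg_cross_rev2: "seg_cross a b c d \<longleftrightarrow> seg_cross a b d c"
  unfolding seg_cross_def by (simp add: closed_segment_commute open_segment_commute)

lemma aff_nonneg:
  fixes \<alpha> \<beta> l \<sigma> :: real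
  assumes "0 \<le> l" "l \<le> \<sigma>" "0 \<le> \<alpha>" "0 \<le> \<alpha> + \<sigma> * \<beta>"
  shows "0 \<le> \<alpha> + l * \<beta>"
proof (cases "\<beta> \<ge> 0")
  case True then show ?thesis using assms by simp
next
  case False
  then have "\<sigma> * \<beta> \<le> l * \<beta>" using assms(2) by (simp add: mult_right_mono_neg)
  then show ?thesis using assms by linarith
qed

lemma aff_root:
  fixes \<alpha> \<beta> \<sigma> :: real
  assumes "\<alpha> < 0" "0 \<le> \<alpha> + \<sigma> * \<beta>" "0 < \<sigma>"
  shows "\<beta> > 0" "0 < - \<alpha> / \<beta>" "- \<alpha> / \<beta> \<le> \<sigma>" "\<alpha> + (- \<alpha> / \<beta>) * \<beta> = 0"
    "\<And>l. - \<alpha> / \<beta> \<le> l \<Longrightarrow> 0 \<le> \<alpha> + l * \<beta>"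
proof -
  have "\<sigma> * \<beta> > 0" using assms by linarith
  then show b: "\<beta> > 0" using assms(3) by (simp add: zero_less_mult_iff)
  show "0 < - \<alpha> / \<beta>" using b assms(1) by (intro divide_pos_pos) auto
  show "- \<alpha> / \<beta> \<le> \<sigma>" using b assms(2) by (simp add: field_simps)
  show "\<alpha> + (- \<alpha> / \<beta>) * \<beta> = 0" using b by simp
  fix l assume "- \<alpha> / \<beta> \<le> l"
  then have "- \<alpha> \<le> l * \<beta>" using b by (simp add: field_simps)
  then show "0 \<le> \<alpha> + l * \<beta>" by linarith
qed

lemma exit_point:
  fixes \<alpha>1 \<beta>1 \<alpha>2 \<beta>2 \<sigma> :: real
  assumes "\<sigma> > 0" "0 \<le> \<alpha>1 + \<sigma> * \<beta>1" "0 \<le> \<alpha>2 + \<sigma> * \<beta>2" "\<alpha>1 < 0 \<or> \<alpha>2 < 0"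
  shows "\<exists>l. 0 < l \<and> l \<le> \<sigma> \<and> 0 \<le> \<alpha>1 + l * \<beta>1 \<and> 0 \<le> \<alpha>2 + l * \<beta>2 \<and>
     (\<alpha>1 + l * \<beta>1 = 0 \<or> \<alpha>2 + l * \<beta>2 = 0)"
proof -
  define l1 where "l1 = (if \<alpha>1 < 0 then - \<alpha>1 / \<beta>1 else 0)"
  define l2 where "l2 = (if \<alpha>2 < 0 then - \<alpha>2 / \<beta>2 else 0)"
  have l1: "0 \<le> l1" "l1 \<le> \<sigma>" "\<And>l. l1 \<le> l \<Longrightarrow> l \<le> \<sigma> \<Longrightarrow> 0 \<le> \<alpha>1 + l * \<beta>1"
    "\<alpha>1 < 0 \<Longrightarrow> 0 < l1 \<and> \<alpha>1 + l1 * \<beta>1 = 0"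
    using aff_root[of \<alpha>1 \<sigma> \<beta>1] aff_nonneg[of _ \<sigma> \<alpha>1 \<beta>1] assms unfolding l1_def
    by (auto split: if_splits)
  have l2: "0 \<le> l2" "l2 \<le> \<sigma>" "\<And>l. l2 \<le> l \<Longrightarrow> l \<le> \<sigma> \<Longrightarrow> 0 \<le> \<alpha>2 + l * \<beta>2"
    "\<alpha>2 < 0 \<Longrightarrow> 0 < l2 \<and> \<alpha>2 + l2 * \<beta>2 = 0"
    using aff_root[of \<alpha>2 \<sigma> \<beta>2] aff_nonneg[of _ \<sigma> \<alpha>2 \<beta>2] assms unfolding l2_def
    by (auto split: if_splits)
  have nz: "l1 = 0 \<Longrightarrow> \<not> \<alpha>1 < 0" "l2 = 0 \<Longrightarrow> \<not> \<alpha>2 < 0" using l1(4) l2(4) by auto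
  have nz2: "\<not> \<alpha>1 < 0 \<Longrightarrow> l1 = 0" "\<not> \<alpha>2 < 0 \<Longrightarrow> l2 = 0" unfolding l1_def l2_def by auto
  show ?thesis
  proof (cases "l1 \<le> l2")
    case True
    have "\<alpha>2 < 0" using True nz nz2 l1(1) assms(4) by force
    then show ?thesis using True l1 l2 by (intro exI[of _ l2]) auto
  next
    case False
    have "\<alpha>1 < 0" using False nz nz2 l2(1) assms(4) by force
    then show ?thesis using False l1 l2 by (intro exI[of _ l1]) auto
  qed
qed

lemma cross_data:
  assumes "seg_cross p q p' q'"
  obtains x \<mu> \<nu> where "p \<noteq> q" "p' \<noteq> q'" "0 < \<mu>" "\<mu> < 1" "0 < \<nu>" "\<nu> < 1"
    "x = p + \<mu> *\<^sub>R (q - p)" "x = p' + \<nu> *\<^sub>R (q' - p')"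
    "cr (q - p) (q' - p') \<noteq> 0" "cr (x - p) (q' - p) \<noteq> 0"
    "x \<in> open_segment p q" "x \<in> open_segment p' q'"
proof -
  from assms obtain x where z: "closed_segment p q \<inter> closed_segment p' q' = {x}"
    "x \<in> open_segment p q" "x \<in> open_segment p' q'" unfolding seg_cross_def by blast
  from z(2) obtain \<mu> where ab: "p \<noteq> q" "0 < \<mu>" "\<mu> < 1" "x = p + \<mu> *\<^sub>R (q - p)"
    by (auto simp: open_seg_iff)
  from z(3) obtain \<nu> where cd: "p' \<noteq> q'" "0 < \<nu>" "\<nu> < 1" "x = p' + \<nu> *\<^sub>R (q' - p')"
    by (auto simp: open_seg_iff)
  have C: "cr (q - p) (q' - p') \<noteq> 0" using seg_cross_nonpar[OF assms] .
  have e1: "x - p = \<mu> *\<^sub>R (q - p)" using ab(4) by simp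
  have e2: "q' - p = (1 - \<nu>) *\<^sub>R (q' - p') + \<mu> *\<^sub>R (q - p)"
    using ab(4) cd(4) by (simp add: algebra_simps)
  have "cr (x - p) (q' - p) = \<mu> * (1 - \<nu>) * cr (q - p) (q' - p')"
    unfolding e1 e2 by (simp only: cr_add2 cr_scale1 cr_scale2 cr_self) simp
  then have "cr (x - p) (q' - p) \<noteq> 0" using C ab cd by simp
  then show ?thesis using that ab cd C z by blast
qed

lemma tri:
  assumes "seg_cross p q p' q'"
  shows "dist p q' < dist p q \<or> dist p' q < dist p' q'"
proof (rule ccontr)
  assume neg: "\<not> ?thesis"
  obtain x \<mu> \<nu> where d: "x \<in> open_segment p q" "x \<in> open_segment p' q'"
    "cr (x - p) (q' - p) \<noteq> 0"
    using cross_data[OF assms] by metis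
  have "dist p q = dist p x + dist x q"
    using d(1) open_closed_segment between between_mem_segment by metis
  moreover have "dist p' q' = dist p' x + dist x q'"
    using d(2) open_closed_segment between between_mem_segment by metis
  moreover have "dist p q' \<le> dist p x + dist x q'" "dist p' q \<le> dist p' x + dist x q"
    by (simp_all add: dist_triangle)
  ultimately have "dist p q' = dist p x + dist x q'" using neg by linarith
  then have "x \<in> closed_segment p q'" using between between_mem_segment by metis
  then obtain \<kappa> where "x = p + \<kappa> *\<^sub>R (q' - p)" by (auto simp: closed_seg_iff)
  then have "x - p = \<kappa> *\<^sub>R (q' - p)" by simp
  then have "cr (x - p) (q' - p) = 0" by (simp only: cr_scale1 cr_self mult_zero_right)
  then show False using d(3) by simp
qed



lemma key:
  assumes finV: "finite V"
    and endV: "\<And>a b. {a, b} \<in> E \<Longrightarrow> a \<in> V \<and> b \<in> V"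
    and pV: "p \<notin> V"
    and cv: "closest_visible V E p q"
    and q'V: "q' \<in> V"
    and vis': "\<And>a b. {a, b} \<in> E \<Longrightarrow> \<not> seg_cross p' q' a b"
    and X: "seg_cross p q p' q'"
    and closer: "dist p q' < dist p q"
  shows False
proof -
  obtain x \<mu> \<nu> where cd: "p \<noteq> q" "p' \<noteq> q'" "0 < \<mu>" "\<mu> < 1" "0 < \<nu>" "\<nu> < 1"
    "x = p + \<mu> *\<^sub>R (q - p)" "x = p' + \<nu> *\<^sub>R (q' - p')"
    "cr (q - p) (q' - p') \<noteq> 0" "cr (x - p) (q' - p) \<noteq> 0"
    using cross_data[OF X] by metis
  have qV: "q \<in> V" and visq: "\<And>a b. {a, b} \<in> E \<Longrightarrow> \<not> seg_cross p q a b"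
    and mind: "\<And>z. visible V E p z \<Longrightarrow> dist p q \<le> dist p z"
    using cv unfolding closest_visible_def visible_def by auto
  define u where "u = x - p"
  define w where "w = q' - p"
  define D where "D = cr u w"
  have D: "D \<noteq> 0" using cd(10) by (simp add: D_def u_def w_def)
  have u_eq: "u = \<mu> *\<^sub>R (q - p)" using cd(7) by (simp add: u_def)
  have q'x: "q' - x = (1 - \<nu>) *\<^sub>R (q' - p')" using cd(8) by (simp add: algebra_simps)
  define S where "S z = cr (z - p) w / D" for z
  define R where "R z = cr u (z - p) / D" for z
  have decomp: "z = p + S z *\<^sub>R u + R z *\<^sub>R w" for z
    using cr_decomp[of u w "z - p"] D unfolding S_def R_def D_def by (simp add: algebra_simps)
  have Sdiff: "S b - S a = cr (b - a) w / D" for a b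
    unfolding S_def by (simp add: diff_divide_distrib[symmetric])
  have Rdiff: "R b - R a = cr u (b - a) / D" for a b
    unfolding R_def by (simp add: diff_divide_distrib[symmetric])
  have Saff: "S (a + l *\<^sub>R (b - a)) = S a + l * (S b - S a)" for a b l
    unfolding Sdiff unfolding S_def using D by (simp add: field_simps)
  have Raff: "R (a + l *\<^sub>R (b - a)) = R a + l * (R b - R a)" for a b l
    unfolding Rdiff unfolding R_def using D by (simp add: field_simps)
  have Sp: "S p = 0" "R p = 0" by (simp_all add: S_def R_def)
  have Sq': "S q' = 0" "R q' = 1" using D by (simp_all add: S_def R_def D_def w_def)
  define VK where "VK = {z \<in> V. 0 \<le> S z \<and> 0 \<le> R z \<and> S z + R z \<le> 1}"
  define t where "t z = R z / (S z + R z)" for z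
  have finVK: "finite VK" using finV by (simp add: VK_def)
  have q'VK: "q' \<in> VK" using q'V Sq' by (simp add: VK_def)
  obtain v where vVK: "v \<in> VK" and vmin: "\<And>z. z \<in> VK \<Longrightarrow> t v \<le> t z"
  proof -
    have ne: "t ` VK \<noteq> {}" using q'VK by auto
    have "Min (t ` VK) \<in> t ` VK" using finVK ne by (rule Min_in[OF finite_imageI])
    then obtain v where "v \<in> VK" "t v = Min (t ` VK)" by auto
    moreover have "\<And>z. z \<in> VK \<Longrightarrow> Min (t ` VK) \<le> t z" using finVK by simp
    ultimately show ?thesis using that by metis
  qed
  have vV: "v \<in> V" and Sv: "0 \<le> S v" "0 \<le> R v" "S v + R v \<le> 1" using vVK by (auto simp: VK_def)
  have vp: "v \<noteq> p" using vV pV by auto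
  have vpos: "S v + R v > 0"
  proof (rule ccontr)
    assume "\<not> ?thesis"
    then have "S v = 0" "R v = 0" using Sv by auto
    then have "v = p" using decomp[of v] by simp
    then show False using vp by simp
  qed
  have nu: "norm u < dist p q"
  proof -
    have "norm u = \<mu> * dist p q" using u_eq cd(3) by (simp add: dist_norm norm_minus_commute)
    also have "\<dots> < dist p q" using cd(1,4) by simp
    finally show ?thesis .
  qed
  have nw: "norm w < dist p q" using closer by (simp add: w_def dist_norm norm_minus_commute)
  have "dist p v < dist p q"
  proof -
    have "dist p v = norm (S v *\<^sub>R u + R v *\<^sub>R w)"
    proof -
      have "v - p = S v *\<^sub>R u + R v *\<^sub>R w" using decomp[of v] by (simp add: algebra_simps)
      then show ?thesis by (metis dist_commute dist_norm)
    qed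
    also have "\<dots> \<le> S v * norm u + R v * norm w"
      using Sv norm_triangle_ineq[of "S v *\<^sub>R u" "R v *\<^sub>R w"] by simp
    also have "\<dots> < (S v + R v) * dist p q"
    proof (cases "S v > 0")
      case True
      have "S v * norm u < S v * dist p q" using True nu by simp
      moreover have "R v * norm w \<le> R v * dist p q" using Sv nw by (simp add: mult_left_mono)
      ultimately show ?thesis by (simp add: algebra_simps)
    next
      case False
      then have "R v > 0" using vpos Sv by linarith
      then have "R v * norm w < R v * dist p q" using nw by simp
      moreover have "S v * norm u \<le> S v * dist p q" using Sv nu by (simp add: mult_left_mono)
      ultimately show ?thesis by (simp add: algebra_simps)
    qed
    also have "\<dots> \<le> dist p q" using Sv by (simp add: mult_left_le_one_le)
    finally show ?thesis .
  qed
  then have "\<not> visible V E p v" using mind by force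
  then obtain a0 b0 where ab0: "{a0, b0} \<in> E" "seg_cross p v a0 b0"
    using vV unfolding visible_def by auto
  define h where "h z = R z * S v - S z * R v" for z
  have hform: "h z = cr (v - p) (z - p) / D" for z
    unfolding h_def S_def R_def D_def using cr_pluecker[of u w "z - p" "v - p"] D
    unfolding D_def by simp
  have hdiff: "h b - h a = cr (v - p) (b - a) / D" for a b
    unfolding hform by (simp add: diff_divide_distrib[symmetric])
  have haff: "h (a + l *\<^sub>R (b - a)) = h a + l * (h b - h a)" for a b l
    unfolding h_def Saff Raff by (simp add: algebra_simps)
  have main: False if E1: "{a, b} \<in> E" and C1: "seg_cross p v a b" and ha: "h a < 0" for a b
  proof -
    obtain y where y: "closed_segment p v \<inter> closed_segment a b = {y}"
      "y \<in> open_segment p v" "y \<in> open_segment a b"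
      using C1 unfolding seg_cross_def by blast
    from y(2) obtain \<tau> where tau: "0 < \<tau>" "\<tau> < 1" "y = p + \<tau> *\<^sub>R (v - p)"
      by (auto simp: open_seg_iff)
    from y(3) obtain \<sigma> where sig: "a \<noteq> b" "0 < \<sigma>" "\<sigma> < 1" "y = a + \<sigma> *\<^sub>R (b - a)"
      by (auto simp: open_seg_iff)
    have aV: "a \<in> V" using endV[OF E1] by simp
    have tauS: "\<tau> * (S v + R v) < 1"
    proof -
      have "\<tau> * (S v + R v) \<le> \<tau>" using Sv tau by (simp add: mult_left_le)
      then show ?thesis using tau by linarith
    qed
    have Sy: "S y = \<tau> * S v" "R y = \<tau> * R v"
      using Saff[of p \<tau> v] Raff[of p \<tau> v] Sp tau(3) by simp_all
    have hy: "h y = 0" unfolding h_def Sy by simp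
    have hsig: "h a + \<sigma> * (h b - h a) = 0" using haff[of a \<sigma> b] hy sig(4) by simp
    have Sya: "S y = S a + \<sigma> * (S b - S a)" "R y = R a + \<sigma> * (R b - R a)"
      using Saff Raff sig(4) by simp_all
    show False
    proof (cases "0 \<le> R a \<and> 0 \<le> 1 - S a - R a")
      case True
      have "R a * S v \<ge> 0" using True Sv by simp
      then have "S a * R v > 0" using ha unfolding h_def by linarith
      then have Sa: "S a > 0" using Sv(2) by (simp add: zero_less_mult_iff)
      have "a \<in> VK" using aV True Sa by (simp add: VK_def)
      then have "t v \<le> t a" by (rule vmin)
      moreover have "t a < t v"
      proof -
        have "R a * (S v + R v) < R v * (S a + R a)" using ha unfolding h_def by (simp add: algebra_simps)
        then show ?thesis unfolding t_def using vpos Sa True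
          by (simp add: divide_simps)
      qed
      ultimately show False by simp
    next
      case False
      have c1: "0 \<le> R a + \<sigma> * (R b - R a)" using Sya Sy Sv tau by simp
      have c2: "0 \<le> (1 - S a - R a) + \<sigma> * (-(S b - S a) - (R b - R a))"
      proof -
        have "S y + R y \<le> 1" using Sy tauS by (simp add: algebra_simps)
        then show ?thesis using Sya by (simp add: algebra_simps)
      qed
      obtain l where l: "0 < l" "l \<le> \<sigma>" "0 \<le> R a + l * (R b - R a)"
        "0 \<le> (1 - S a - R a) + l * (-(S b - S a) - (R b - R a))"
        "R a + l * (R b - R a) = 0 \<or> (1 - S a - R a) + l * (-(S b - S a) - (R b - R a)) = 0"
        using exit_point[OF sig(2) c1 c2] False by (auto simp: not_le)
      define G where "G = a + l *\<^sub>R (b - a)"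
      have SG: "S G = S a + l * (S b - S a)" "R G = R a + l * (R b - R a)"
        unfolding G_def using Saff Raff by simp_all
      have Gab: "G \<in> open_segment a b" unfolding open_seg_iff G_def using sig l by auto
      have hG: "h G = h a + l * (h b - h a)" unfolding G_def by (rule haff)
      have hGlt: "h G < 0" if "l < \<sigma>"
      proof -
        have "\<sigma> * (h b - h a) > 0" using hsig ha by linarith
        then have "h b - h a > 0" using sig(2) by (simp add: zero_less_mult_iff)
        then have "l * (h b - h a) < \<sigma> * (h b - h a)" using that by simp
        then show ?thesis using hG hsig by linarith
      qed
      have GeqY: "G = y" if "l = \<sigma>" using that sig(4) G_def by simp
      show False
      proof (cases "R G = 0")
        case True
        have SGpos: "S G > 0"
        proof (cases "l < \<sigma>")
          case True
          then have "R G * S v - S G * R v < 0" using hGlt unfolding h_def by simp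
          then have "S G * R v > 0" using \<open>R G = 0\<close> by simp
          then show ?thesis using Sv(2) by (simp add: zero_less_mult_iff)
        next
          case False
          then have "G = y" using GeqY l(2) by simp
          then have "\<tau> * R v = 0" using Sy \<open>R G = 0\<close> by simp
          then have "R v = 0" using tau by simp
          then have "S v > 0" using vpos by simp
          then show ?thesis using \<open>G = y\<close> Sy tau by simp
        qed
        have SG1: "S G \<le> 1" using l(4) SG True by (simp add: algebra_simps)
        have "G = p + (S G * \<mu>) *\<^sub>R (q - p)"
          using decomp[of G] True u_eq by simp
        moreover have "S G * \<mu> < 1"
        proof -
          have "S G * \<mu> \<le> \<mu>" using SG1 cd(3) by (simp add: mult_left_le_one_le)
          then show ?thesis using cd(4) by linarith
        qed
        ultimately have Gpq: "G \<in> open_segment p q" unfolding open_seg_iff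
          using cd SGpos by (auto intro!: exI[of _ "S G * \<mu>"])
        have "cr (q - p) (b - a) \<noteq> 0"
        proof
          assume c0: "cr (q - p) (b - a) = 0"
          have "R b - R a = 0" unfolding Rdiff u_eq using c0 by simp
          then have "R y = 0" using Sya SG True by simp
          then have "R v = 0" using Sy tau by simp
          moreover have "R a = 0" using \<open>R b - R a = 0\<close> SG True by simp
          ultimately show False using ha unfolding h_def by simp
        qed
        then have "seg_cross p q a b" using seg_cross_intro[OF Gpq Gab] by simp
        then show False using visq[OF E1] by simp
      next
        case False
        then have RGpos: "R G > 0" using l(3) SG by simp
        have sum1: "S G + R G = 1" using l(5) False SG by (simp add: algebra_simps)
        have lsig: "l < \<sigma>"
        proof (rule ccontr)
          assume "\<not> l < \<sigma>"
          then have "G = y" using GeqY l(2) by simp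
          then have "\<tau> * (S v + R v) = 1" using sum1 Sy by (simp add: algebra_simps)
          moreover have "\<tau> * (S v + R v) < 1" using tauS .
          ultimately show False by simp
        qed
        have "R G * S v - S G * R v < 0" using hGlt[OF lsig] unfolding h_def by simp
        moreover have "R G * S v \<ge> 0" using RGpos Sv by simp
        ultimately have "S G * R v > 0" by linarith
        then have SGpos: "S G > 0" using Sv(2) by (simp add: zero_less_mult_iff)
        have RG1: "R G < 1" using sum1 SGpos by simp
        have "G = p + S G *\<^sub>R u + R G *\<^sub>R w" by (rule decomp)
        also have "\<dots> = x + R G *\<^sub>R (q' - x)"
        proof -
          have e: "S G = 1 - R G" using sum1 by simp
          show ?thesis unfolding u_def w_def e by (simp add: algebra_simps)
        qed
        also have "\<dots> = p' + (\<nu> + R G * (1 - \<nu>)) *\<^sub>R (q' - p')"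
          unfolding q'x cd(8) by (simp add: algebra_simps)
        finally have Gdef: "G = p' + (\<nu> + R G * (1 - \<nu>)) *\<^sub>R (q' - p')" .
        have r1: "R G * (1 - \<nu>) < 1 - \<nu>" using RG1 cd(6) by simp
        have r2: "R G * (1 - \<nu>) > 0" using RGpos cd(6) by simp
        have Gpq: "G \<in> open_segment p' q'" unfolding open_seg_iff
        proof (intro conjI exI)
          show "p' \<noteq> q'" by (rule cd(2))
          show "0 < \<nu> + R G * (1 - \<nu>)" "\<nu> + R G * (1 - \<nu>) < 1" using r1 r2 cd(5) by linarith+
        qed (rule Gdef)
        have "cr (q' - p') (b - a) \<noteq> 0"
        proof
          assume c0: "cr (q' - p') (b - a) = 0"
          have uw: "u - w = - ((1 - \<nu>) *\<^sub>R (q' - p'))" unfolding u_def w_def q'x[symmetric] by simp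
          have "cr (b - a) w + cr u (b - a) = cr (u - w) (b - a)"
            by (simp add: cr_swap[of b w] cr_swap[of a w])
          also have "\<dots> = 0" unfolding uw using c0 by simp
          finally have "(S b - S a) + (R b - R a) = 0" unfolding Sdiff Rdiff
            by (simp add: add_divide_distrib[symmetric])
          note d0 = this
          have "S y + R y = S a + R a + \<sigma> * ((S b - S a) + (R b - R a))" using Sya by (simp add: algebra_simps)
          moreover have "S G + R G = S a + R a + l * ((S b - S a) + (R b - R a))" using SG by (simp add: algebra_simps)
          ultimately have "S y + R y = S G + R G" unfolding d0 by simp
          then have "\<tau> * (S v + R v) = 1" using sum1 Sy by (simp add: algebra_simps)
          moreover have "\<tau> * (S v + R v) < 1" using tauS .
          ultimately show False by simp
        qed
        then have "seg_cross p' q' a b" using seg_cross_intro[OF Gpq Gab] by simp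
        then show False using vis'[OF E1] by simp
      qed
    qed
  qed
  have hne: "h a0 \<noteq> h b0"
  proof
    assume "h a0 = h b0"
    then have "cr (v - p) (b0 - a0) = 0" using hdiff[of b0 a0] D by simp
    then show False using seg_cross_nonpar[OF ab0(2)] by simp
  qed
  have hb0: "h b0 \<ge> 0"
  proof (rule ccontr)
    assume "\<not> h b0 \<ge> 0"
    moreover have "{b0, a0} \<in> E" using ab0(1) by (simp add: insert_commute)
    moreover have "seg_cross p v b0 a0" using seg_cross_rev2[THEN iffD1, OF ab0(2)] .
    ultimately show False using main[of b0 a0] by (meson not_le)
  qed
  have ha0: "h a0 \<ge> 0" using main[of a0 b0] ab0 by (meson not_le)
  obtain y0 where y0: "y0 \<in> open_segment p v" "y0 \<in> open_segment a0 b0"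
    using ab0(2) unfolding seg_cross_def by blast
  from y0(1) obtain \<tau> where tau: "0 < \<tau>" "\<tau> < 1" "y0 = p + \<tau> *\<^sub>R (v - p)"
    by (auto simp: open_seg_iff)
  from y0(2) obtain \<sigma> where sig: "0 < \<sigma>" "\<sigma> < 1" "y0 = a0 + \<sigma> *\<^sub>R (b0 - a0)"
    by (auto simp: open_seg_iff)
  have "S y0 = \<tau> * S v" "R y0 = \<tau> * R v"
    using Saff[of p \<tau> v] Raff[of p \<tau> v] Sp tau(3) by simp_all
  then have "h y0 = 0" unfolding h_def by simp
  then have hs: "(1 - \<sigma>) * h a0 + \<sigma> * h b0 = 0" using haff[of a0 \<sigma> b0] sig(3) by (simp add: algebra_simps)
  have n1: "(1 - \<sigma>) * h a0 \<ge> 0" using sig ha0 by simp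
  have n2: "\<sigma> * h b0 \<ge> 0" using sig hb0 by simp
  have "(1 - \<sigma>) * h a0 = 0" "\<sigma> * h b0 = 0" using n1 n2 hs by linarith+
  then show False using sig hne by simp
qed



lemma seg_cross_norm:
  assumes "seg_cross a b c d" "{a, b} = {p, q}" "{c, d} = {r, s}"
  shows "seg_cross p q r s"
proof -
  have 1: "seg_cross p q c d"
  proof (cases "a = p \<and> b = q")
    case True then show ?thesis using assms(1) by simp
  next
    case False
    then have "a = q" "b = p" using assms(2) by (auto simp: doubleton_eq_iff)
    then show ?thesis using seg_cross_rev1[THEN iffD1, OF assms(1)] by simp
  qed
  show ?thesis
  proof (cases "c = r \<and> d = s")
    case True then show ?thesis using 1 by simp
  next
    case False
    then have "c = s" "d = r" using assms(3) by (auto simp: doubleton_eq_iff)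
    then show ?thesis using seg_cross_rev2[THEN iffD1, OF 1] by simp
  qed
qed

theorem theorem2:
  fixes V :: "pt set" and E :: "pt set set" and Q :: "pt set" and f :: "pt \<Rightarrow> pt"
  assumes "plane_graph V E"
    and "finite Q"
    and "Q \<inter> graph_points V E = {}"
    and "\<forall>p\<in>Q. closest_visible V E p (f p)"
  shows "plane_graph (V \<union> Q) (E \<union> (\<lambda>p. {p, f p}) ` Q)"
proof -
  have finV: "finite V" and geo: "\<forall>e\<in>E. \<exists>a b. e = {a, b} \<and> a \<in> V \<and> b \<in> V \<and> a \<noteq> b"
    and noX: "\<forall>e\<in>E. \<forall>e'\<in>E. \<not> edges_cross e e'"
  proof -
    have g: "geometric_graph V E" and n: "\<forall>e\<in>E. \<forall>e'\<in>E. \<not> edges_cross e e'"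
      using assms(1) unfolding plane_graph_def by simp_all
    from g show "finite V" "\<forall>e\<in>E. \<exists>a b. e = {a, b} \<and> a \<in> V \<and> b \<in> V \<and> a \<noteq> b"
      unfolding geometric_graph_def by simp_all
    from n show "\<forall>e\<in>E. \<forall>e'\<in>E. \<not> edges_cross e e'" .
  qed
  have endV: "a \<in> V \<and> b \<in> V" if "{a, b} \<in> E" for a b
  proof -
    have "\<exists>a' b'. {a, b} = {a', b'} \<and> a' \<in> V \<and> b' \<in> V \<and> a' \<noteq> b'" using bspec[OF geo that] .
    then obtain a' b' where "{a, b} = {a', b'}" "a' \<in> V" "b' \<in> V" by auto
    then show ?thesis by (auto simp: doubleton_eq_iff)
  qed
  have pV: "p \<notin> V" if "p \<in> Q" for p
  proof -
    have "V \<subseteq> graph_points V E" unfolding graph_points_def by (rule Un_upper1)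
    then show ?thesis using assms(3) that by blast
  qed
  have cv: "closest_visible V E p (f p)" if "p \<in> Q" for p using bspec[OF assms(4) that] .
  have fV: "f p \<in> V" if "p \<in> Q" for p using cv[OF that] by (simp add: closest_visible_def visible_def)
  have vis: "\<not> seg_cross p (f p) a b" if "p \<in> Q" "{a, b} \<in> E" for p a b
    using cv[OF that(1)] that(2) by (simp add: closest_visible_def visible_def)
  have newnew: False if pQ: "p \<in> Q" and p'Q: "p' \<in> Q" and X: "seg_cross p (f p) p' (f p')" for p p'
  proof -
    have k1: "dist p (f p') < dist p (f p) \<Longrightarrow> False"
      using key[where V=V and E=E and p=p and q="f p" and q'="f p'" and p'=p'] finV endV pV[OF pQ] cv[OF pQ] fV[OF p'Q] vis[OF p'Q] X
      by blast
    have X2: "seg_cross p' (f p') p (f p)" using seg_cross_sym[THEN iffD1, OF X] .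
    have k2: "dist p' (f p) < dist p' (f p') \<Longrightarrow> False"
      using key[where V=V and E=E and p=p' and q="f p'" and q'="f p" and p'=p] finV endV pV[OF p'Q] cv[OF p'Q] fV[OF pQ] vis[OF pQ] X2
      by blast
    show False using tri[OF X] k1 k2 by blast
  qed
  show ?thesis
    unfolding plane_graph_def geometric_graph_def
  proof (intro conjI ballI)
    show "finite (V \<union> Q)" using finV assms(2) by simp
  next
    fix e assume "e \<in> E \<union> (\<lambda>p. {p, f p}) ` Q"
    then show "\<exists>a b. e = {a, b} \<and> a \<in> V \<union> Q \<and> b \<in> V \<union> Q \<and> a \<noteq> b"
    proof
      assume "e \<in> E" then show ?thesis using geo by blast
    next
      assume "e \<in> (\<lambda>p. {p, f p}) ` Q"
      then obtain p where pQ: "p \<in> Q" and ep: "e = {p, f p}" by blast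
      have "f p \<in> V" "p \<notin> V" using fV[OF pQ] pV[OF pQ] by simp_all
      then have "p \<noteq> f p" by auto
      then show ?thesis using ep pQ \<open>f p \<in> V\<close> by (intro exI[of _ p] exI[of _ "f p"]) auto
    qed
  next
    fix e e' assume e: "e \<in> E \<union> (\<lambda>p. {p, f p}) ` Q" and e': "e' \<in> E \<union> (\<lambda>p. {p, f p}) ` Q"
    show "\<not> edges_cross e e'"
    proof
      assume "edges_cross e e'"
      then obtain a b c d where abcd: "e = {a, b}" "e' = {c, d}" "seg_cross a b c d"
        unfolding edges_cross_def by blast
      show False
      proof (cases "e \<in> E")
        case eE: True
        show False
        proof (cases "e' \<in> E")
          case True
          then show False using noX eE \<open>edges_cross e e'\<close> by blast
        next
          case False
          then obtain p' where p': "p' \<in> Q" "e' = {p', f p'}" using e' by blast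
          have "seg_cross a b p' (f p')" using seg_cross_norm[OF abcd(3)] abcd p' by simp
          then have "seg_cross p' (f p') a b" using seg_cross_sym[THEN iffD1] by blast
          then show False using vis[OF p'(1)] eE abcd(1) by blast
        qed
      next
        case False
        then obtain p where p: "p \<in> Q" "e = {p, f p}" using e by blast
        show False
        proof (cases "e' \<in> E")
          case True
          have "seg_cross p (f p) c d" using seg_cross_norm[OF abcd(3)] abcd p by simp
          then show False using vis[OF p(1)] True abcd(2) by blast
        next
          case False
          then obtain p' where p': "p' \<in> Q" "e' = {p', f p'}" using e' by blast
          have "seg_cross p (f p) p' (f p')" using seg_cross_norm[OF abcd(3)] abcd p p' by simp
          then show False using newnew p p' by blast
        qed
      qed
    qed
  qed
qed

end
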